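(* For every Stone space $X$ the Heisenberg group $H_X=(\mathbb{Z}_2\oplus V)\rtimes V^{*}$ is a minimal and non-archimedean topological group.
   Context: A Stone space is a compact zero-dimensional Hausdorff space. $\mathbb{Z}_2$ is the discrete two-element group. $V=C(X,\mathbb{Z}_2)$ is the Boolean group of continuous maps $X\to\mathbb{Z}_2$ (equivalently, clopen subsets of $X$ under symmetric difference) with the discrete topology. $V^*=\mathrm{Hom}(V,\mathbb{Z}_2)$ is the group of all homomorphisms $V\to\mathbb{Z}_2$ with the topology of pointwise convergence (a compact subgroup of $\mathbb{Z}_2^V$). $H_X$ is the set $\mathbb{Z}_2\times V\times V^*$ with the product topology and multiplication $(a_1,x_1,f_1)(a_2,x_2,f_2)=(a_1+a_2+f_1(x_2),\,x_1+x_2,\,f_1+f_2)$. A Hausdorff topological group is minimal if it admits no strictly coarser Hausdorff group topology. A topological group is non-archimedean if it has a local base at the identity consisting of open subgroups. *)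

theory Defs
  imports "HOL-Analysis.Analysis" "HOL-Algebra.Group"
begin

text \<open>Z_2 is represented by bool, with addition = exclusive or (i.e. \<open>\<noteq>\<close>), 0 = False.\<close>

definition stone_space :: "'a topology \<Rightarrow> bool" where
  "stone_space X \<longleftrightarrow> compact_space X \<and> Hausdorff_space X \<and> X dim_le 0"

text \<open>V = C(X,Z_2), represented as the clopen subsets of X, group operation = symmetric difference.\<close>
definition clopens :: "'a topology \<Rightarrow> 'a set set" where
  "clopens X = {U. closedin X U \<and> openin X U}"

definition symdiff :: "'a set \<Rightarrow> 'a set \<Rightarrow> 'a set" where
  "symdiff A B = (A - B) \<union> (B - A)"

definition dual_hom :: "'a topology \<Rightarrow> ('a set \<Rightarrow> bool) set" where
  "dual_hom X = {f. f \<in> extensional (clopens X) \<and>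
      (\<forall>A\<in>clopens X. \<forall>B\<in>clopens X. f (symdiff A B) = (f A \<noteq> f B))}"

definition dual_topology :: "'a topology \<Rightarrow> ('a set \<Rightarrow> bool) topology" where
  "dual_topology X = subtopology (product_topology (\<lambda>_. discrete_topology (UNIV::bool set)) (clopens X)) (dual_hom X)"

definition heis_group :: "'a topology \<Rightarrow> (bool \<times> 'a set \<times> ('a set \<Rightarrow> bool)) monoid" where
  "heis_group X = \<lparr> carrier = UNIV \<times> clopens X \<times> dual_hom X,
     mult = (\<lambda>(a1, x1, f1) (a2, x2, f2).
               ((a1 \<noteq> a2) \<noteq> f1 x2, symdiff x1 x2, \<lambda>A\<in>clopens X. f1 A \<noteq> f2 A)),
     one = (False, {}, \<lambda>A\<in>clopens X. False) \<rparr>"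

definition heis_topology :: "'a topology \<Rightarrow> (bool \<times> 'a set \<times> ('a set \<Rightarrow> bool)) topology" where
  "heis_topology X = prod_topology (discrete_topology UNIV)
      (prod_topology (discrete_topology (clopens X)) (dual_topology X))"

definition group_topology :: "('g, 'b) monoid_scheme \<Rightarrow> 'g topology \<Rightarrow> bool" where
  "group_topology G T \<longleftrightarrow> group G \<and> topspace T = carrier G \<and>
     continuous_map (prod_topology T T) T (\<lambda>(x, y). x \<otimes>\<^bsub>G\<^esub> y) \<and>
     continuous_map T T (\<lambda>x. inv\<^bsub>G\<^esub> x)"

definition minimal_group :: "('g, 'b) monoid_scheme \<Rightarrow> 'g topology \<Rightarrow> bool" where
  "minimal_group G T \<longleftrightarrow> group_topology G T \<and> Hausdorff_space T \<and>
     (\<forall>T'. group_topology G T' \<and> Hausdorff_space T' \<and> (\<forall>U. openin T' U \<longrightarrow> openin T U)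
        \<longrightarrow> T' = T)"

definition non_archimedean_group :: "('g, 'b) monoid_scheme \<Rightarrow> 'g topology \<Rightarrow> bool" where
  "non_archimedean_group G T \<longleftrightarrow> group_topology G T \<and>
     (\<forall>U. openin T U \<and> \<one>\<^bsub>G\<^esub> \<in> U \<longrightarrow> (\<exists>H. subgroup H G \<and> openin T H \<and> H \<subseteq> U))"

end

theory Submission
  imports Defs
begin

lemma clopen_symdiff: "A \<in> clopens X \<Longrightarrow> B \<in> clopens X \<Longrightarrow> symdiff A B \<in> clopens X"
  unfolding clopens_def symdiff_def by (auto intro: closedin_Un openin_Un closedin_diff openin_diff)

lemma clopen_empty[simp]: "{} \<in> clopens X"
  unfolding clopens_def by auto

lemma clopen_sub: "A \<in> clopens X \<Longrightarrow> A \<subseteq> topspace X"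
  unfolding clopens_def by (auto dest: openin_subset)

lemma hom_symdiff: "f \<in> dual_hom X \<Longrightarrow> A \<in> clopens X \<Longrightarrow> B \<in> clopens X \<Longrightarrow> f (symdiff A B) = (f A \<noteq> f B)"
  unfolding dual_hom_def by blast

lemma hom_empty[simp]: "f \<in> dual_hom X \<Longrightarrow> f {} = False"
  using hom_symdiff[of f X "{}" "{}"] by (simp add: symdiff_def)

lemma hom_ext: "f \<in> dual_hom X \<Longrightarrow> A \<notin> clopens X \<Longrightarrow> f A = undefined"
  unfolding dual_hom_def extensional_def by blast

lemma dual_add: "f \<in> dual_hom X \<Longrightarrow> g \<in> dual_hom X \<Longrightarrow> (\<lambda>A\<in>clopens X. f A \<noteq> g A) \<in> dual_hom X"
  unfolding dual_hom_def using clopen_symdiff by (auto simp: extensional_def)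

lemma dual_add': "f \<in> dual_hom X \<Longrightarrow> g \<in> dual_hom X \<Longrightarrow> (\<lambda>A\<in>clopens X. f A = (\<not> g A)) \<in> dual_hom X"
  using dual_add[of f X g] by simp

lemma dual_zero[simp]: "(\<lambda>A\<in>clopens X. False) \<in> dual_hom X"
  unfolding dual_hom_def using clopen_symdiff by (auto simp: extensional_def)

lemma dual_pts: "(\<lambda>A\<in>clopens X. (p \<in> A) \<noteq> (q \<in> A)) \<in> dual_hom X"
  unfolding dual_hom_def using clopen_symdiff by (auto simp: extensional_def symdiff_def)

lemma symdiff_assoc: "symdiff (symdiff a b) c = symdiff a (symdiff b c)"
  unfolding symdiff_def by blast

lemma symdiff_self[simp]: "symdiff a a = {}" "symdiff {} a = a" "symdiff a {} = a"
  unfolding symdiff_def by blast+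

lemma carrier_heis: "carrier (heis_group X) = UNIV \<times> clopens X \<times> dual_hom X"
  by (simp add: heis_group_def)

lemma mult_heis: "(a1, x1, f1) \<otimes>\<^bsub>heis_group X\<^esub> (a2, x2, f2) =
   ((a1 \<noteq> a2) \<noteq> f1 x2, symdiff x1 x2, \<lambda>A\<in>clopens X. f1 A \<noteq> f2 A)"
  by (simp add: heis_group_def)

lemma one_heis: "\<one>\<^bsub>heis_group X\<^esub> = (False, {}, \<lambda>A\<in>clopens X. False)"
  by (simp add: heis_group_def)

lemma hom_restrict_eq: "f \<in> dual_hom X \<Longrightarrow> (\<lambda>A\<in>clopens X. f A) = f"
  using hom_ext by (auto simp: restrict_def)

lemma group_heis: "group (heis_group X)"
proof (rule groupI)
  fix x y assume "x \<in> carrier (heis_group X)" "y \<in> carrier (heis_group X)"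
  then show "x \<otimes>\<^bsub>heis_group X\<^esub> y \<in> carrier (heis_group X)"
    by (cases x; cases y) (auto simp: carrier_heis mult_heis clopen_symdiff dual_add dual_add')
next
  show "\<one>\<^bsub>heis_group X\<^esub> \<in> carrier (heis_group X)"
    by (simp add: carrier_heis one_heis)
next
  fix x y z assume "x \<in> carrier (heis_group X)" "y \<in> carrier (heis_group X)" "z \<in> carrier (heis_group X)"
  then show "x \<otimes>\<^bsub>heis_group X\<^esub> y \<otimes>\<^bsub>heis_group X\<^esub> z = x \<otimes>\<^bsub>heis_group X\<^esub> (y \<otimes>\<^bsub>heis_group X\<^esub> z)"
    by (cases x; cases y; cases z) (auto simp: carrier_heis mult_heis clopen_symdiff symdiff_assoc hom_symdiff restrict_def)
next
  fix x assume "x \<in> carrier (heis_group X)"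
  then show "\<one>\<^bsub>heis_group X\<^esub> \<otimes>\<^bsub>heis_group X\<^esub> x = x"
    by (cases x) (auto simp: carrier_heis mult_heis one_heis restrict_def hom_ext intro!: ext)
next
  fix x assume "x \<in> carrier (heis_group X)"
  then obtain a v f where x: "x = (a, v, f)" "v \<in> clopens X" "f \<in> dual_hom X"
    by (cases x) (auto simp: carrier_heis)
  show "\<exists>y\<in>carrier (heis_group X). y \<otimes>\<^bsub>heis_group X\<^esub> x = \<one>\<^bsub>heis_group X\<^esub>"
    by (rule bexI[of _ "(a \<noteq> f v, v, f)"]) (use x in \<open>auto simp: carrier_heis mult_heis one_heis\<close>)
qed

lemma inv_heis: "f \<in> dual_hom X \<Longrightarrow> v \<in> clopens X \<Longrightarrow>
   inv\<^bsub>heis_group X\<^esub> (a, v, f) = (a \<noteq> f v, v, f)"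
  by (rule group.inv_equality[OF group_heis]) (auto simp: carrier_heis mult_heis one_heis)

lemma openin_TimesI: "openin X S \<Longrightarrow> openin Y T \<Longrightarrow> openin (prod_topology X Y) (S \<times> T)"
  by (simp add: openin_prod_Times_iff)

lemma dual_sub_ext: "dual_hom X \<subseteq> (\<Pi>\<^sub>E i\<in>clopens X. UNIV)"
  unfolding dual_hom_def by (auto simp: PiE_def)

lemma topspace_dual[simp]: "topspace (dual_topology X) = dual_hom X"
  using dual_sub_ext[of X] by (auto simp: dual_topology_def)

lemma topspace_heis: "topspace (heis_topology X) = carrier (heis_group X)"
  by (simp add: heis_topology_def carrier_heis)

lemma open_dual_fin:
  assumes "finite K" "K \<subseteq> clopens X"
  shows "openin (dual_topology X) {f \<in> dual_hom X. \<forall>k\<in>K. f k = c k}"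
proof -
  let ?P = "\<Pi>\<^sub>E i\<in>clopens X. (if i \<in> K then {c i} else (UNIV::bool set))"
  have "openin (product_topology (\<lambda>_. discrete_topology (UNIV::bool set)) (clopens X)) ?P"
  proof (rule iffD2[OF openin_PiE_gen], rule disjI2, intro conjI)
    show "finite {i \<in> clopens X. (if i \<in> K then {c i} else UNIV) \<noteq> topspace (discrete_topology (UNIV::bool set))}"
      by (rule finite_subset[OF _ assms(1)]) auto
  qed auto
  moreover have "{f \<in> dual_hom X. \<forall>k\<in>K. f k = c k} = ?P \<inter> dual_hom X"
    using dual_sub_ext[of X] assms(2) by (auto simp: PiE_def Pi_def split: if_splits)
  ultimately show ?thesis
    unfolding dual_topology_def openin_subtopology by blast
qed

lemma loc_const:
  assumes "\<And>x. x \<in> topspace Z \<Longrightarrow> \<exists>U. openin Z U \<and> x \<in> U \<and> (\<forall>y\<in>U. h y = h x)"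
    and "h ` topspace Z \<subseteq> S"
  shows "continuous_map Z (discrete_topology S) h"
proof -
  have 1: "\<forall>x\<in>topspace Z. h x \<in> topspace (discrete_topology S)" using assms(2) by auto
  have 2: "openin Z {x \<in> topspace Z. h x \<in> V}" for V
  proof -
    have "\<exists>T. openin Z T \<and> x \<in> T \<and> T \<subseteq> {x \<in> topspace Z. h x \<in> V}"
      if x: "x \<in> {x \<in> topspace Z. h x \<in> V}" for x
    proof -
      from x have "x \<in> topspace Z" by simp
      from assms(1)[OF this] obtain U where U: "openin Z U" "x \<in> U" "\<forall>y\<in>U. h y = h x"
        by blast
      have "U \<subseteq> topspace Z" by (rule openin_subset[OF U(1)])
      then have "U \<subseteq> {x \<in> topspace Z. h x \<in> V}" using U(3) x by auto
      then show ?thesis using U(1,2) by blast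
    qed
    then show ?thesis by (intro iffD2[OF openin_subopen] ballI)
  qed
  show ?thesis unfolding continuous_map_def using 1 2 by simp
qed

definition nb1 where
  "nb1 X p K = (case p of (a, x, f) \<Rightarrow> {a} \<times> {x} \<times> {g \<in> dual_hom X. \<forall>k\<in>K. g k = f k})"

lemma nb1:
  assumes "p \<in> topspace (heis_topology X)" "finite K" "K \<subseteq> clopens X"
  shows "openin (heis_topology X) (nb1 X p K)" "p \<in> nb1 X p K"
proof -
  obtain a x f where p: "p = (a, x, f)" "x \<in> clopens X" "f \<in> dual_hom X"
    using assms(1) by (cases p) (auto simp: topspace_heis carrier_heis)
  show "openin (heis_topology X) (nb1 X p K)"
    unfolding p nb1_def prod.case heis_topology_def using p
    by (intro openin_TimesI open_dual_fin assms) auto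
  show "p \<in> nb1 X p K" using p by (simp add: nb1_def)
qed

definition nb2 where
  "nb2 X P K = nb1 X (fst P) K \<times> nb1 X (snd P) K"

lemma nb2:
  assumes "P \<in> topspace (prod_topology (heis_topology X) (heis_topology X))" "finite K" "K \<subseteq> clopens X"
  shows "openin (prod_topology (heis_topology X) (heis_topology X)) (nb2 X P K)" "P \<in> nb2 X P K"
proof -
  have "fst P \<in> topspace (heis_topology X)" "snd P \<in> topspace (heis_topology X)"
    using assms(1) by (auto simp: topspace_prod_topology)
  then show "openin (prod_topology (heis_topology X) (heis_topology X)) (nb2 X P K)" "P \<in> nb2 X P K"
    unfolding nb2_def using nb1(2)[OF _ assms(2,3)]
    by (auto intro: openin_TimesI nb1(1)[OF _ assms(2,3)] simp: mem_Times_iff)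
qed

lemma loc_const1:
  assumes "\<And>p. p \<in> topspace (heis_topology X) \<Longrightarrow> \<exists>K. finite K \<and> K \<subseteq> clopens X \<and> (\<forall>q\<in>nb1 X p K. h q = h p)"
    and "h ` topspace (heis_topology X) \<subseteq> S"
  shows "continuous_map (heis_topology X) (discrete_topology S) h"
  by (rule loc_const[OF _ assms(2)]) (metis assms(1) nb1)

lemma loc_const2:
  assumes "\<And>p. p \<in> topspace (prod_topology (heis_topology X) (heis_topology X)) \<Longrightarrow> \<exists>K. finite K \<and> K \<subseteq> clopens X \<and> (\<forall>q\<in>nb2 X p K. h q = h p)"
    and "h ` topspace (prod_topology (heis_topology X) (heis_topology X)) \<subseteq> S"
  shows "continuous_map (prod_topology (heis_topology X) (heis_topology X)) (discrete_topology S) h"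
  by (rule loc_const[OF _ assms(2)]) (metis assms(1) nb2)

lemma cont_into_heis:
  assumes "continuous_map Z (discrete_topology UNIV) (\<lambda>z. fst (h z))"
    "continuous_map Z (discrete_topology (clopens X)) (\<lambda>z. fst (snd (h z)))"
    "\<And>k. k \<in> clopens X \<Longrightarrow> continuous_map Z (discrete_topology UNIV) (\<lambda>z. snd (snd (h z)) k)"
    "\<And>z. z \<in> topspace Z \<Longrightarrow> snd (snd (h z)) \<in> dual_hom X"
  shows "continuous_map Z (heis_topology X) h"
  unfolding heis_topology_def dual_topology_def continuous_map_pairwise continuous_map_in_subtopology
    continuous_map_componentwise o_def
  using assms dual_sub_ext[of X] by (auto simp: PiE_def)

lemma nb2_mem: "Q \<in> nb2 X ((a1,x1,f1),(a2,x2,f2)) K \<longleftrightarrow>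
  (\<exists>g1 g2. Q = ((a1,x1,g1),(a2,x2,g2)) \<and> g1 \<in> dual_hom X \<and> g2 \<in> dual_hom X \<and> (\<forall>k\<in>K. g1 k = f1 k \<and> g2 k = f2 k))"
  by (cases Q) (auto simp: nb2_def nb1_def)

lemma nb1_mem: "q \<in> nb1 X (a1,x1,f1) K \<longleftrightarrow>
  (\<exists>g1. q = (a1,x1,g1) \<and> g1 \<in> dual_hom X \<and> (\<forall>k\<in>K. g1 k = f1 k))"
  by (cases q) (auto simp: nb1_def)

lemma top2_cases:
  assumes "P \<in> topspace (prod_topology (heis_topology X) (heis_topology X))"
  obtains a1 x1 f1 a2 x2 f2 where "P = ((a1,x1,f1),(a2,x2,f2))" "x1 \<in> clopens X" "x2 \<in> clopens X"
    "f1 \<in> dual_hom X" "f2 \<in> dual_hom X"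
  using assms by (cases P) (auto simp: topspace_heis carrier_heis)

lemma top1_cases:
  assumes "p \<in> topspace (heis_topology X)"
  obtains a1 x1 f1 where "p = (a1,x1,f1)" "x1 \<in> clopens X" "f1 \<in> dual_hom X"
  using assms by (cases p) (auto simp: topspace_heis carrier_heis)

lemma mult_cont:
  "continuous_map (prod_topology (heis_topology X) (heis_topology X)) (heis_topology X)
     (\<lambda>(x, y). x \<otimes>\<^bsub>heis_group X\<^esub> y)"
proof (rule cont_into_heis)
  show "continuous_map (prod_topology (heis_topology X) (heis_topology X)) (discrete_topology UNIV)
     (\<lambda>z. fst (case z of (x, y) \<Rightarrow> x \<otimes>\<^bsub>heis_group X\<^esub> y))"
  proof (rule loc_const2)
    fix P assume "P \<in> topspace (prod_topology (heis_topology X) (heis_topology X))"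
    then obtain a1 x1 f1 a2 x2 f2 where P: "P = ((a1,x1,f1),(a2,x2,f2))" "x1 \<in> clopens X" "x2 \<in> clopens X"
      by (rule top2_cases)
    show "\<exists>K. finite K \<and> K \<subseteq> clopens X \<and> (\<forall>q\<in>nb2 X P K. fst (case q of (x, y) \<Rightarrow> x \<otimes>\<^bsub>heis_group X\<^esub> y) = fst (case P of (x, y) \<Rightarrow> x \<otimes>\<^bsub>heis_group X\<^esub> y))"
      by (rule exI[of _ "{x2}"]) (auto simp: P nb2_mem mult_heis)
  qed auto
  show "continuous_map (prod_topology (heis_topology X) (heis_topology X)) (discrete_topology (clopens X))
     (\<lambda>z. fst (snd (case z of (x, y) \<Rightarrow> x \<otimes>\<^bsub>heis_group X\<^esub> y)))"
  proof (rule loc_const2)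
    fix P assume "P \<in> topspace (prod_topology (heis_topology X) (heis_topology X))"
    then obtain a1 x1 f1 a2 x2 f2 where P: "P = ((a1,x1,f1),(a2,x2,f2))" "x1 \<in> clopens X" "x2 \<in> clopens X"
      by (rule top2_cases)
    show "\<exists>K. finite K \<and> K \<subseteq> clopens X \<and> (\<forall>q\<in>nb2 X P K. fst (snd (case q of (x, y) \<Rightarrow> x \<otimes>\<^bsub>heis_group X\<^esub> y)) = fst (snd (case P of (x, y) \<Rightarrow> x \<otimes>\<^bsub>heis_group X\<^esub> y)))"
      by (rule exI[of _ "{}"]) (auto simp: P nb2_mem mult_heis)
  next
    show "(\<lambda>z. fst (snd (case z of (x, y) \<Rightarrow> x \<otimes>\<^bsub>heis_group X\<^esub> y))) ` topspace (prod_topology (heis_topology X) (heis_topology X)) \<subseteq> clopens X"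
      by (auto simp: mult_heis clopen_symdiff topspace_heis carrier_heis)
  qed
  fix k assume k: "k \<in> clopens X"
  show "continuous_map (prod_topology (heis_topology X) (heis_topology X)) (discrete_topology UNIV)
     (\<lambda>z. snd (snd (case z of (x, y) \<Rightarrow> x \<otimes>\<^bsub>heis_group X\<^esub> y)) k)"
  proof (rule loc_const2)
    fix P assume "P \<in> topspace (prod_topology (heis_topology X) (heis_topology X))"
    then obtain a1 x1 f1 a2 x2 f2 where P: "P = ((a1,x1,f1),(a2,x2,f2))" "x1 \<in> clopens X" "x2 \<in> clopens X"
      by (rule top2_cases)
    show "\<exists>K. finite K \<and> K \<subseteq> clopens X \<and> (\<forall>q\<in>nb2 X P K. snd (snd (case q of (x, y) \<Rightarrow> x \<otimes>\<^bsub>heis_group X\<^esub> y)) k = snd (snd (case P of (x, y) \<Rightarrow> x \<otimes>\<^bsub>heis_group X\<^esub> y)) k)"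
      by (rule exI[of _ "{k}"]) (use k in \<open>auto simp: P nb2_mem mult_heis\<close>)
  qed auto
next
  fix z assume "z \<in> topspace (prod_topology (heis_topology X) (heis_topology X))"
  then show "snd (snd (case z of (x, y) \<Rightarrow> x \<otimes>\<^bsub>heis_group X\<^esub> y)) \<in> dual_hom X"
    by (auto simp: mult_heis dual_add dual_add' topspace_heis carrier_heis)
qed

lemma inv_cont_aux:
  "continuous_map (heis_topology X) (heis_topology X) (\<lambda>(a, v, f). (a \<noteq> f v, v, f))"
proof (rule cont_into_heis)
  show "continuous_map (heis_topology X) (discrete_topology UNIV) (\<lambda>z. fst (case z of (a, v, f) \<Rightarrow> (a \<noteq> f v, v, f)))"
  proof (rule loc_const1)
    fix p assume "p \<in> topspace (heis_topology X)"
    then obtain a1 x1 f1 where P: "p = (a1,x1,f1)" "x1 \<in> clopens X" by (rule top1_cases)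
    show "\<exists>K. finite K \<and> K \<subseteq> clopens X \<and> (\<forall>q\<in>nb1 X p K. fst (case q of (a, v, f) \<Rightarrow> (a \<noteq> f v, v, f)) = fst (case p of (a, v, f) \<Rightarrow> (a \<noteq> f v, v, f)))"
      by (rule exI[of _ "{x1}"]) (auto simp: P nb1_mem)
  qed auto
  show "continuous_map (heis_topology X) (discrete_topology (clopens X)) (\<lambda>z. fst (snd (case z of (a, v, f) \<Rightarrow> (a \<noteq> f v, v, f))))"
  proof (rule loc_const1)
    fix p assume "p \<in> topspace (heis_topology X)"
    then obtain a1 x1 f1 where P: "p = (a1,x1,f1)" "x1 \<in> clopens X" by (rule top1_cases)
    show "\<exists>K. finite K \<and> K \<subseteq> clopens X \<and> (\<forall>q\<in>nb1 X p K. fst (snd (case q of (a, v, f) \<Rightarrow> (a \<noteq> f v, v, f))) = fst (snd (case p of (a, v, f) \<Rightarrow> (a \<noteq> f v, v, f))))"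
      by (rule exI[of _ "{}"]) (auto simp: P nb1_mem)
  next
    show "(\<lambda>z. fst (snd (case z of (a, v, f) \<Rightarrow> (a \<noteq> f v, v, f)))) ` topspace (heis_topology X) \<subseteq> clopens X"
      by (auto simp: topspace_heis carrier_heis)
  qed
  fix k assume k: "k \<in> clopens X"
  show "continuous_map (heis_topology X) (discrete_topology UNIV) (\<lambda>z. snd (snd (case z of (a, v, f) \<Rightarrow> (a \<noteq> f v, v, f))) k)"
  proof (rule loc_const1)
    fix p assume "p \<in> topspace (heis_topology X)"
    then obtain a1 x1 f1 where P: "p = (a1,x1,f1)" "x1 \<in> clopens X" by (rule top1_cases)
    show "\<exists>K. finite K \<and> K \<subseteq> clopens X \<and> (\<forall>q\<in>nb1 X p K. snd (snd (case q of (a, v, f) \<Rightarrow> (a \<noteq> f v, v, f))) k = snd (snd (case p of (a, v, f) \<Rightarrow> (a \<noteq> f v, v, f))) k)"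
      by (rule exI[of _ "{k}"]) (use k in \<open>auto simp: P nb1_mem\<close>)
  qed auto
next
  fix z assume "z \<in> topspace (heis_topology X)"
  then show "snd (snd (case z of (a, v, f) \<Rightarrow> (a \<noteq> f v, v, f))) \<in> dual_hom X"
    by (auto simp: topspace_heis carrier_heis)
qed

lemma inv_cont: "continuous_map (heis_topology X) (heis_topology X) (\<lambda>x. inv\<^bsub>heis_group X\<^esub> x)"
  by (rule continuous_map_eq[OF inv_cont_aux]) (auto simp: inv_heis topspace_heis carrier_heis)

lemma hausdorff_heis: "Hausdorff_space (heis_topology X)"
  unfolding heis_topology_def dual_topology_def
  by (auto simp: Hausdorff_space_prod_topology Hausdorff_space_product_topology
      intro!: Hausdorff_space_subtopology)

lemma group_top_heis: "group_topology (heis_group X) (heis_topology X)"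
  unfolding group_topology_def using group_heis topspace_heis mult_cont inv_cont by blast

lemma nbhd_e:
  assumes Ob: "openin (heis_topology X) Ob" and e: "(False, {}, \<lambda>A\<in>clopens X. False) \<in> Ob"
  shows "\<exists>Z0. finite Z0 \<and> Z0 \<subseteq> clopens X \<and>
           (\<forall>g\<in>dual_hom X. (\<forall>z\<in>Z0. g z = False) \<longrightarrow> (False, {}, g) \<in> Ob)"
proof -
  let ?z = "\<lambda>A\<in>clopens X. False"
  from openin_prod_topology_alt[THEN iffD1, rule_format, OF Ob[unfolded heis_topology_def] e]
  obtain U V where UV: "openin (discrete_topology UNIV) U"
     "openin (prod_topology (discrete_topology (clopens X)) (dual_topology X)) V"
     "False \<in> U" "({}, ?z) \<in> V" "U \<times> V \<subseteq> Ob"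
    by blast
  from openin_prod_topology_alt[THEN iffD1, rule_format, OF UV(2) UV(4)]
  obtain U2 W where UW: "openin (discrete_topology (clopens X)) U2"
     "openin (dual_topology X) W" "{} \<in> U2" "?z \<in> W" "U2 \<times> W \<subseteq> V"
    by blast
  from UW(2) obtain W' where W': "openin (product_topology (\<lambda>_. discrete_topology (UNIV::bool set)) (clopens X)) W'"
     "W = W' \<inter> dual_hom X"
    unfolding dual_topology_def openin_subtopology by blast
  with UW(4) have "?z \<in> W'" by blast
  with W'(1) obtain Uf where Uf: "finite {i \<in> clopens X. Uf i \<noteq> topspace (discrete_topology (UNIV::bool set))}"
     "?z \<in> (\<Pi>\<^sub>E i\<in>clopens X. Uf i)" "(\<Pi>\<^sub>E i\<in>clopens X. Uf i) \<subseteq> W'"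
    unfolding openin_product_topology_alt by blast
  define Z0 where "Z0 = {i \<in> clopens X. Uf i \<noteq> UNIV}"
  have "finite Z0" using Uf(1) by (simp add: Z0_def)
  moreover have "Z0 \<subseteq> clopens X" by (auto simp: Z0_def)
  moreover have "(False, {}, g) \<in> Ob" if g: "g \<in> dual_hom X" "\<forall>z\<in>Z0. g z = False" for g
  proof -
    have "g \<in> (\<Pi>\<^sub>E i\<in>clopens X. Uf i)"
    proof (rule PiE_I)
      fix i assume i: "i \<in> clopens X"
      show "g i \<in> Uf i"
      proof (cases "i \<in> Z0")
        case True
        then have "g i = False" using g by blast
        moreover have "?z i \<in> Uf i" using Uf(2) i by (auto simp: PiE_def Pi_def)
        ultimately show ?thesis using i by simp
      next
        case False
        then show ?thesis using i by (simp add: Z0_def)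
      qed
    next
      fix i assume "i \<notin> clopens X" then show "g i = undefined" using hom_ext g(1) by blast
    qed
    then have "g \<in> W" using Uf(3) W'(2) g(1) by blast
    then have "({}, g) \<in> V" using UW(3,5) by blast
    then show ?thesis using UV(3,5) by blast
  qed
  ultimately show ?thesis by blast
qed

lemma nonarch_heis: fixes X :: "'a topology" shows "non_archimedean_group (heis_group X) (heis_topology X)"
  unfolding non_archimedean_group_def
proof (intro conjI allI impI group_top_heis)
  fix Ob assume "openin (heis_topology X) Ob \<and> \<one>\<^bsub>heis_group X\<^esub> \<in> Ob"
  then obtain Z0 where Z0: "finite Z0" "Z0 \<subseteq> clopens X"
     "\<forall>g\<in>dual_hom X. (\<forall>z\<in>Z0. g z = False) \<longrightarrow> (False, {}, g) \<in> Ob"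
    using nbhd_e[of X Ob] by (auto simp: one_heis)
  define H where "H = {False} \<times> {{}::'a set} \<times> {g \<in> dual_hom X. \<forall>k\<in>Z0. g k = (\<lambda>_. False) k}"
  have "openin (heis_topology X) H"
    unfolding H_def heis_topology_def
    by (intro openin_TimesI open_dual_fin Z0) auto
  moreover have "H \<subseteq> Ob" using Z0(3) by (auto simp: H_def)
  moreover have "subgroup H (heis_group X)"
  proof (rule group.subgroupI[OF group_heis])
    show "H \<subseteq> carrier (heis_group X)" by (auto simp: H_def carrier_heis)
    have "(False, {}, \<lambda>A\<in>clopens X. False) \<in> H" using Z0(2) by (auto simp: H_def)
    then show "H \<noteq> {}" by blast
    fix a assume "a \<in> H"
    then show "inv\<^bsub>heis_group X\<^esub> a \<in> H" by (auto simp: H_def inv_heis)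
  next
    fix a b assume "a \<in> H" "b \<in> H"
    then show "a \<otimes>\<^bsub>heis_group X\<^esub> b \<in> H"
      using Z0(2) by (auto simp: H_def mult_heis dual_add dual_add')
  qed
  ultimately show "\<exists>H. subgroup H (heis_group X) \<and> openin (heis_topology X) H \<and> H \<subseteq> Ob" by blast
qed

lemma closed_dual:
  "closedin (product_topology (\<lambda>_. discrete_topology (UNIV::bool set)) (clopens X)) (dual_hom X)"
proof -
  let ?P = "product_topology (\<lambda>_. discrete_topology (UNIV::bool set)) (clopens X)"
  have "openin ?P (topspace ?P - dual_hom X)"
  proof (rule iffD2[OF openin_subopen], intro ballI)
    fix f assume f: "f \<in> topspace ?P - dual_hom X"
    then have fe: "f \<in> (\<Pi>\<^sub>E i\<in>clopens X. UNIV)" by simp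
    then obtain A B where AB: "A \<in> clopens X" "B \<in> clopens X" "f (symdiff A B) \<noteq> (f A \<noteq> f B)"
      using f unfolding dual_hom_def by (auto simp: PiE_def)
    define N where "N = (\<Pi>\<^sub>E i\<in>clopens X. if i \<in> {A, B, symdiff A B} then {f i} else (UNIV::bool set))"
    have "openin ?P N"
      unfolding N_def
    proof (rule iffD2[OF openin_PiE_gen], rule disjI2, intro conjI)
      show "finite {i \<in> clopens X. (if i \<in> {A, B, symdiff A B} then {f i} else UNIV) \<noteq> topspace (discrete_topology (UNIV::bool set))}"
        by (rule finite_subset[of _ "{A, B, symdiff A B}"]) auto
    qed auto
    moreover have "f \<in> N" using fe by (auto simp: N_def PiE_def Pi_def)
    moreover have "N \<subseteq> topspace ?P - dual_hom X"
    proof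
      fix g assume g: "g \<in> N"
      have "g A = f A" using PiE_mem[OF g[unfolded N_def] AB(1)] by simp
      moreover have "g B = f B" using PiE_mem[OF g[unfolded N_def] AB(2)] by simp
      moreover have "g (symdiff A B) = f (symdiff A B)"
        using PiE_mem[OF g[unfolded N_def] clopen_symdiff[OF AB(1,2)]] by simp
      ultimately have "g \<notin> dual_hom X" using AB hom_symdiff[of g X A B] by auto
      moreover have "g \<in> topspace ?P" using g unfolding N_def by (auto simp: PiE_iff)
      ultimately show "g \<in> topspace ?P - dual_hom X" by blast
    qed
    ultimately show "\<exists>T. openin ?P T \<and> f \<in> T \<and> T \<subseteq> topspace ?P - dual_hom X" by blast
  qed
  moreover have "dual_hom X \<subseteq> topspace ?P" using dual_sub_ext by simp
  ultimately show ?thesis unfolding closedin_def by blast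
qed

lemma compact_dual: "compact_space (dual_topology X)"
proof -
  let ?P = "product_topology (\<lambda>_. discrete_topology (UNIV::bool set)) (clopens X)"
  have "compact_space ?P"
    by (simp add: compact_space_product_topology compact_space_discrete_topology)
  then have "compactin ?P (dual_hom X)" using closed_dual closedin_compact_space by blast
  then show ?thesis unfolding dual_topology_def by (rule compact_space_subtopology)
qed

lemma compact_L:
  assumes "finite F" "F \<subseteq> clopens X"
  shows "compactin (heis_topology X) (UNIV \<times> F \<times> dual_hom X)"
proof -
  have "compactin (dual_topology X) (dual_hom X)"
    using compact_dual[of X] by (simp add: compact_space_def)
  then show ?thesis
    unfolding heis_topology_def using assms
    by (simp add: compactin_Times compactin_discrete_topology)
qed

lemma gt_mult:
  assumes "group_topology G T" "continuous_map Z T f" "continuous_map Z T g"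
  shows "continuous_map Z T (\<lambda>x. f x \<otimes>\<^bsub>G\<^esub> g x)"
proof -
  have "continuous_map Z (prod_topology T T) (\<lambda>x. (f x, g x))"
    using assms(2,3) by (rule continuous_map_pairedI)
  from continuous_map_compose[OF this, of T "\<lambda>(x, y). x \<otimes>\<^bsub>G\<^esub> y"] assms(1) show ?thesis
    unfolding group_topology_def by (simp add: o_def)
qed

lemma gt_inv:
  assumes "group_topology G T" "continuous_map Z T f"
  shows "continuous_map Z T (\<lambda>x. inv\<^bsub>G\<^esub> (f x))"
proof -
  from continuous_map_compose[OF assms(2), of T "\<lambda>x. inv\<^bsub>G\<^esub> x"] assms(1) show ?thesis
    unfolding group_topology_def by (simp add: o_def)
qed

lemma comm_heis:
  assumes "x \<in> clopens X" "y \<in> clopens X" "f \<in> dual_hom X" "g \<in> dual_hom X"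
  shows "(a, x, f) \<otimes>\<^bsub>heis_group X\<^esub> (b, y, g) \<otimes>\<^bsub>heis_group X\<^esub> inv\<^bsub>heis_group X\<^esub> (a, x, f)
           \<otimes>\<^bsub>heis_group X\<^esub> inv\<^bsub>heis_group X\<^esub> (b, y, g) = (f y \<noteq> g x, {}, \<lambda>A\<in>clopens X. False)"
  using assms by (auto simp: inv_heis mult_heis symdiff_def restrict_def intro!: ext)

lemma minimal_part:
  fixes X :: "'a topology"
  assumes gT: "group_topology (heis_group X) T'" and hT: "Hausdorff_space T'"
    and sub: "\<forall>U. openin T' U \<longrightarrow> openin (heis_topology X) U"
  shows "T' = heis_topology X"
proof -
  let ?G = "heis_group X"
  let ?t = "heis_topology X"
  let ?z = "\<lambda>A\<in>clopens X. False"
  have grp: "group ?G" by (rule group_heis)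
  have tsp: "topspace T' = carrier ?G" using gT by (simp add: group_topology_def)
  have tsp2: "topspace ?t = carrier ?G" by (rule topspace_heis)
  have cid1: "openin ?t {x \<in> topspace ?t. id x \<in> U}" if U: "openin T' U" for U
  proof -
    have "{x \<in> topspace ?t. id x \<in> U} = U" using openin_subset[OF U] tsp tsp2 by auto
    then show ?thesis using sub U by simp
  qed
  have cid: "continuous_map ?t T' id"
    unfolding continuous_map_def using cid1 tsp tsp2 by simp
  have cl': "closedin T' S" if "compactin ?t S" for S
  proof -
    have "compactin T' (id ` S)" by (rule image_compactin[OF that cid])
    then show ?thesis using compactin_imp_closedin[OF hT] by simp
  qed
  have e_in: "(False, {}, ?z) \<in> topspace T'" and zz_in: "(True, {}, ?z) \<in> topspace T'"
    using tsp by (auto simp: carrier_heis)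
  obtain W1 W2 where W: "openin T' W1" "openin T' W2" "(False, {}, ?z) \<in> W1" "(True, {}, ?z) \<in> W2"
      "disjnt W1 W2"
  proof -
    have ne: "(False, {}, ?z) \<noteq> (True, {}, ?z)" by simp
    have "\<exists>U V. openin T' U \<and> openin T' V \<and> (False, {}, ?z) \<in> U \<and> (True, {}, ?z) \<in> V \<and> disjnt U V"
      using hT e_in zz_in ne unfolding Hausdorff_space_def by blast
    then show ?thesis using that by blast
  qed
  have zzW: "(True, {}, ?z) \<notin> W1" using W(4,5) by (auto simp: disjnt_def)
  define c where "c = (\<lambda>P. fst P \<otimes>\<^bsub>?G\<^esub> snd P \<otimes>\<^bsub>?G\<^esub> inv\<^bsub>?G\<^esub> (fst P) \<otimes>\<^bsub>?G\<^esub> inv\<^bsub>?G\<^esub> (snd P))"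
  have cc: "continuous_map (prod_topology T' T') T' c"
    unfolding c_def
    by (intro gt_mult[OF gT] gt_inv[OF gT] continuous_map_fst continuous_map_snd)
  have opP: "openin (prod_topology T' T') {P \<in> topspace (prod_topology T' T'). c P \<in> W1}"
    by (rule openin_continuous_map_preimage[OF cc W(1)])
  have ee: "((False, {}, ?z), (False, {}, ?z)) \<in> {P \<in> topspace (prod_topology T' T'). c P \<in> W1}"
  proof -
    have "c ((False, {}, ?z), (False, {}, ?z)) = (False, {}, ?z)"
      unfolding c_def by (simp add: comm_heis)
    then show ?thesis using e_in W(3) by simp
  qed
  from openin_prod_topology_alt[THEN iffD1, rule_format, OF opP ee] obtain U1 U2 where U12: "openin T' U1" "openin T' U2" "(False, {}, ?z) \<in> U1" "(False, {}, ?z) \<in> U2"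
     "U1 \<times> U2 \<subseteq> {P \<in> topspace (prod_topology T' T'). c P \<in> W1}"
    by blast
  define U where "U = U1 \<inter> U2"
  have Uo: "openin T' U" using U12 by (auto simp: U_def)
  have eU: "(False, {}, ?z) \<in> U" using U12 by (auto simp: U_def)
  have Usub: "U \<subseteq> carrier ?G" using openin_subset[OF Uo] tsp by simp
  have Ucomm: "f y = g x" if p: "(a, x, f) \<in> U" and q: "(b, y, g) \<in> U" for a x f b y g
  proof -
    have cW: "c ((a, x, f), (b, y, g)) \<in> W1" using U12(5) p q by (auto simp: U_def)
    have "x \<in> clopens X" "f \<in> dual_hom X" "y \<in> clopens X" "g \<in> dual_hom X"
      using p q Usub by (auto simp: carrier_heis)
    then have "c ((a, x, f), (b, y, g)) = (f y \<noteq> g x, {}, ?z)"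
      unfolding c_def by (simp add: comm_heis)
    then show ?thesis using cW zzW by (cases "f y = g x") auto
  qed
  have "openin ?t U" using sub Uo by blast
  from nbhd_e[OF this eU] obtain Z0 where Z0: "finite Z0" "Z0 \<subseteq> clopens X"
      "\<forall>g\<in>dual_hom X. (\<forall>z\<in>Z0. g z = False) \<longrightarrow> (False, {}, g) \<in> U"
    by blast
  define tp where "tp = (\<lambda>p. {z \<in> Z0. p \<in> z})"
  define F where "F = (\<lambda>T. {p \<in> topspace X. tp p \<in> T}) ` Pow (Pow Z0)"
  have finF: "finite F" using Z0(1) by (simp add: F_def)
  have xF: "x \<in> F" if p: "(a, x, f) \<in> U" for a x f
  proof -
    have xc: "x \<in> clopens X" and fd: "f \<in> dual_hom X" using p Usub by (auto simp: carrier_heis)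
    have same: "p \<in> x" if "q \<in> x" "p \<in> topspace X" "tp p = tp q" for p q
    proof -
      define g where "g = (\<lambda>A\<in>clopens X. (p \<in> A) \<noteq> (q \<in> A))"
      have gd: "g \<in> dual_hom X" unfolding g_def by (rule dual_pts)
      have "g z = False" if z: "z \<in> Z0" for z
      proof -
        have "(p \<in> z) = (q \<in> z)" using \<open>tp p = tp q\<close> z unfolding tp_def by blast
        moreover have "z \<in> clopens X" using z Z0(2) by blast
        ultimately show ?thesis by (simp add: g_def)
      qed
      then have "\<forall>z\<in>Z0. g z = False" by blast
      then have "(False, {}, g) \<in> U" using Z0(3) gd by blast
      then have "f {} = g x" using Ucomm p by blast
      then have "g x = False" using fd by simp
      then show ?thesis using that(1) xc by (simp add: g_def)
    qed
    have xs: "x \<subseteq> topspace X" by (rule clopen_sub[OF xc])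
    have "x = {p \<in> topspace X. tp p \<in> tp ` x}"
    proof (rule equalityI)
      show "x \<subseteq> {p \<in> topspace X. tp p \<in> tp ` x}" using xs by blast
      show "{p \<in> topspace X. tp p \<in> tp ` x} \<subseteq> x"
      proof
        fix p assume "p \<in> {p \<in> topspace X. tp p \<in> tp ` x}"
        then obtain q where "p \<in> topspace X" "q \<in> x" "tp p = tp q" by blast
        then show "p \<in> x" using same by blast
      qed
    qed
    moreover have "tp ` x \<in> Pow (Pow Z0)" by (auto simp: tp_def)
    ultimately show ?thesis unfolding F_def by blast
  qed
  define L where "L = (UNIV::bool set) \<times> (F \<inter> clopens X) \<times> dual_hom X"
  have UL: "U \<subseteq> L"
  proof
    fix p assume p: "p \<in> U"
    then obtain a x f where "p = (a, x, f)" by (cases p) auto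
    then show "p \<in> L" using p xF Usub by (auto simp: L_def carrier_heis)
  qed
  have cL: "compactin ?t L" unfolding L_def by (rule compact_L) (use finF in auto)
  have "openin T' S" if S: "openin ?t S" for S
  proof (rule iffD2[OF openin_subopen], intro ballI)
    fix h assume hS: "h \<in> S"
    have hc: "h \<in> carrier ?G" using openin_subset[OF S] hS tsp2 by auto
    have lm: "continuous_map ?t ?t (\<lambda>y. h \<otimes>\<^bsub>?G\<^esub> y)"
      by (rule gt_mult[OF group_top_heis]) (use hc tsp2 in auto)
    define hL where "hL = (\<lambda>y. h \<otimes>\<^bsub>?G\<^esub> y) ` L"
    have chL: "compactin ?t hL" unfolding hL_def by (rule image_compactin[OF cL lm])
    define C where "C = hL - S"
    have "C = (topspace ?t - S) \<inter> hL" using compactin_subset_topspace[OF chL] by (auto simp: C_def)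
    then have "compactin ?t C" using closed_Int_compactin[OF _ chL] S by auto
    then have Ccl: "closedin T' C" by (rule cl')
    define hU where "hU = (\<lambda>y. h \<otimes>\<^bsub>?G\<^esub> y) ` U"
    have ilm: "continuous_map T' T' (\<lambda>y. inv\<^bsub>?G\<^esub> h \<otimes>\<^bsub>?G\<^esub> y)"
      by (rule gt_mult[OF gT]) (use hc tsp grp in auto)
    have "hU = {y \<in> topspace T'. inv\<^bsub>?G\<^esub> h \<otimes>\<^bsub>?G\<^esub> y \<in> U}"
    proof
      show "hU \<subseteq> {y \<in> topspace T'. inv\<^bsub>?G\<^esub> h \<otimes>\<^bsub>?G\<^esub> y \<in> U}"
      proof
        fix y assume "y \<in> hU"
        then obtain u where u: "u \<in> U" "y = h \<otimes>\<^bsub>?G\<^esub> u" by (auto simp: hU_def)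
        have uc: "u \<in> carrier ?G" using u Usub by auto
        have yc: "y \<in> carrier ?G" using u(2) hc uc grp by (simp add: monoid.m_closed group.is_monoid)
        have "inv\<^bsub>?G\<^esub> h \<otimes>\<^bsub>?G\<^esub> y = u"
          using group.inv_solve_left[OF grp uc hc yc] u(2) by simp
        moreover note yc
        ultimately show "y \<in> {y \<in> topspace T'. inv\<^bsub>?G\<^esub> h \<otimes>\<^bsub>?G\<^esub> y \<in> U}" using u(1) tsp by simp
      qed
      show "{y \<in> topspace T'. inv\<^bsub>?G\<^esub> h \<otimes>\<^bsub>?G\<^esub> y \<in> U} \<subseteq> hU"
      proof
        fix y assume y: "y \<in> {y \<in> topspace T'. inv\<^bsub>?G\<^esub> h \<otimes>\<^bsub>?G\<^esub> y \<in> U}"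
        then have yc: "y \<in> carrier ?G" using tsp by simp
        have wc: "inv\<^bsub>?G\<^esub> h \<otimes>\<^bsub>?G\<^esub> y \<in> carrier ?G"
          using hc yc grp by (simp add: group.inv_closed monoid.m_closed group.is_monoid)
        have "y = h \<otimes>\<^bsub>?G\<^esub> (inv\<^bsub>?G\<^esub> h \<otimes>\<^bsub>?G\<^esub> y)"
          using group.inv_solve_left[OF grp wc hc yc] by simp
        then show "y \<in> hU" using y unfolding hU_def by blast
      qed
    qed
    then have hUo: "openin T' hU" using openin_continuous_map_preimage[OF ilm Uo] by simp
    have "openin T' (hU - C)" using hUo Ccl by (rule openin_diff)
    moreover have "h \<in> hU - C"
    proof -
      have "h \<otimes>\<^bsub>?G\<^esub> (False, {}, ?z) = h"
        using hc grp by (simp add: one_heis[symmetric] group.is_monoid monoid.r_one)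
      then have "h \<in> hU" using eU unfolding hU_def by (metis image_eqI)
      then show ?thesis using hS by (simp add: C_def)
    qed
    moreover have "hU - C \<subseteq> S"
      using UL by (auto simp: hU_def hL_def C_def)
    ultimately show "\<exists>T. openin T' T \<and> h \<in> T \<and> T \<subseteq> S" by blast
  qed
  then show ?thesis using sub by (auto simp: topology_eq)
qed

theorem theorem4p1:
  fixes X :: "'a topology"
  assumes "stone_space X"
  shows "minimal_group (heis_group X) (heis_topology X) \<and>
         non_archimedean_group (heis_group X) (heis_topology X)"
  unfolding minimal_group_def
  using group_top_heis[of X] hausdorff_heis[of X] minimal_part[of X] nonarch_heis[of X] by blast

end
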